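(* Let $\mathbb{K}$ be a field, $\theta=(\{X_t\}_{t\in G},\{h_t\}_{t\in G})$ a free partial action of a group $G$ on a set $X$, $R=\{(x,h_t(x)): t\in G,\ x\in X_{t^{-1}}\}$, and $\mathcal{F}_0(R)$ the algebra of finitely supported functions $R\to\mathbb{K}$ with pointwise linear operations and product $(f*g)(x,h_t(x))=\sum_{s\in G,\ x\in X_{s^{-1}}} f(x,h_s(x))\,g(h_s(x),h_t(x))$. If $I$ is a (two-sided) ideal of $\mathcal{F}_0(R)$, then there exists an $R$-invariant subset $Z\subseteq X$ such that $I=\mathcal{F}_0((Z\times Z)\cap R)$, the set of $f\in\mathcal{F}_0(R)$ vanishing outside $(Z\times Z)\cap R$.
   Context: A partial action of $G$ on a set $X$: subsets $X_t$, bijections $h_t:X_{t^{-1}}\to X_t$, $X_e=X$, $h_e=\mathrm{id}$, $h_t(X_{t^{-1}}\cap X_s)=X_t\cap X_{ts}$, $h_th_s=h_{ts}$ on $X_{s^{-1}}\cap X_{s^{-1}t^{-1}}$; free means $h_t(x)=x$ implies $t=e$. A subset $Z\subseteq X$ is $R$-invariant if whenever $(z,x)\in R$ with $z\in Z$, then $x\in Z$. *)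

theory Defs
  imports Main
begin

text \<open>A group G is rendered as a type of class group_add (written additively:
 0 is the identity, - t the inverse, t + s the product ts).
 A partial action of G on the set X: domains Xd t, maps h t.\<close>

definition partial_action ::
  "'x set \<Rightarrow> ('g::group_add \<Rightarrow> 'x set) \<Rightarrow> ('g \<Rightarrow> 'x \<Rightarrow> 'x) \<Rightarrow> bool" where
  "partial_action X Xd h \<longleftrightarrow>
     (\<forall>t. Xd t \<subseteq> X) \<and>
     (\<forall>t. bij_betw (h t) (Xd (- t)) (Xd t)) \<and>
     Xd 0 = X \<and> (\<forall>x\<in>X. h 0 x = x) \<and>
     (\<forall>t s. h t ` (Xd (- t) \<inter> Xd s) = Xd t \<inter> Xd (t + s)) \<and>
     (\<forall>t s. \<forall>x \<in> Xd (- s) \<inter> Xd (- s + - t). h t (h s x) = h (t + s) x)"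

definition free_partial_action ::
  "'x set \<Rightarrow> ('g::group_add \<Rightarrow> 'x set) \<Rightarrow> ('g \<Rightarrow> 'x \<Rightarrow> 'x) \<Rightarrow> bool" where
  "free_partial_action X Xd h \<longleftrightarrow> partial_action X Xd h \<and>
     (\<forall>t x. x \<in> Xd (- t) \<and> h t x = x \<longrightarrow> t = 0)"

definition orbit_rel :: "('g::group_add \<Rightarrow> 'x set) \<Rightarrow> ('g \<Rightarrow> 'x \<Rightarrow> 'x) \<Rightarrow> ('x \<times> 'x) set" where
  "orbit_rel Xd h = {(x, h t x) | t x. x \<in> Xd (- t)}"

definition F0 :: "('x \<times> 'x) set \<Rightarrow> ('x \<times> 'x \<Rightarrow> 'k::field) set" where
  "F0 S = {f. finite {p. f p \<noteq> 0} \<and> (\<forall>p. p \<notin> S \<longrightarrow> f p = 0)}"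

text \<open>Convolution product on F0(R):
  (f * g)(x, y) = sum over s with x in X_{s^{-1}} of f(x, h_s x) g(h_s x, y) for (x,y) in R
  (only finitely many nonzero terms; the sum is taken over those s with f(x,h_s x) nonzero),
  and 0 outside R.\<close>
definition conv ::
  "('g::group_add \<Rightarrow> 'x set) \<Rightarrow> ('g \<Rightarrow> 'x \<Rightarrow> 'x) \<Rightarrow>
   ('x \<times> 'x \<Rightarrow> 'k::field) \<Rightarrow> ('x \<times> 'x \<Rightarrow> 'k) \<Rightarrow> ('x \<times> 'x \<Rightarrow> 'k)" where
  "conv Xd h f g = (\<lambda>(x, y). if (x, y) \<in> orbit_rel Xd h then
      (\<Sum>s \<in> {s. x \<in> Xd (- s) \<and> f (x, h s x) \<noteq> 0}. f (x, h s x) * g (h s x, y))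
    else 0)"

definition is_ideal ::
  "('g::group_add \<Rightarrow> 'x set) \<Rightarrow> ('g \<Rightarrow> 'x \<Rightarrow> 'x) \<Rightarrow> ('x \<times> 'x \<Rightarrow> 'k::field) set \<Rightarrow> bool" where
  "is_ideal Xd h I \<longleftrightarrow>
     I \<subseteq> F0 (orbit_rel Xd h) \<and> (\<lambda>_. 0) \<in> I \<and>
     (\<forall>f\<in>I. \<forall>g\<in>I. (\<lambda>p. f p + g p) \<in> I) \<and>
     (\<forall>c. \<forall>f\<in>I. (\<lambda>p. c * f p) \<in> I) \<and>
     (\<forall>f\<in>F0 (orbit_rel Xd h). \<forall>g\<in>I. conv Xd h f g \<in> I \<and> conv Xd h g f \<in> I)"

definition R_invariant :: "('x \<times> 'x) set \<Rightarrow> 'x set \<Rightarrow> bool" where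
  "R_invariant R Z \<longleftrightarrow> (\<forall>z x. (z, x) \<in> R \<and> z \<in> Z \<longrightarrow> x \<in> Z)"

end

theory Submission imports Defs begin

lemma pa_D:
  assumes "partial_action X Xd h"
  shows pa_sub: "\<And>t. Xd t \<subseteq> X"
    and pa_bij: "\<And>t. bij_betw (h t) (Xd (- t)) (Xd t)"
    and pa_0: "Xd 0 = X"
    and pa_h0: "\<And>x. x \<in> X \<Longrightarrow> h 0 x = x"
    and pa_img: "\<And>t s. h t ` (Xd (- t) \<inter> Xd s) = Xd t \<inter> Xd (t + s)"
    and pa_comp: "\<And>t s x. x \<in> Xd (- s) \<Longrightarrow> x \<in> Xd (- s + - t) \<Longrightarrow> h t (h s x) = h (t + s) x"
proof -
  note A = assms[unfolded partial_action_def]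
  show "\<And>t. Xd t \<subseteq> X" using conjunct1[OF A] by (rule spec)
  show "\<And>t. bij_betw (h t) (Xd (- t)) (Xd t)" using conjunct1[OF conjunct2[OF A]] by (rule spec)
  show "Xd 0 = X" using conjunct1[OF conjunct2[OF conjunct2[OF A]]] .
  show "\<And>x. x \<in> X \<Longrightarrow> h 0 x = x" using conjunct1[OF conjunct2[OF conjunct2[OF conjunct2[OF A]]]] by blast
  show "\<And>t s. h t ` (Xd (- t) \<inter> Xd s) = Xd t \<inter> Xd (t + s)"
    using conjunct1[OF conjunct2[OF conjunct2[OF conjunct2[OF conjunct2[OF A]]]]] by blast
  have C: "\<forall>t s. \<forall>x \<in> Xd (- s) \<inter> Xd (- s + - t). h t (h s x) = h (t + s) x"
    using conjunct2[OF conjunct2[OF conjunct2[OF conjunct2[OF conjunct2[OF A]]]]] .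
  show "\<And>t s x. x \<in> Xd (- s) \<Longrightarrow> x \<in> Xd (- s + - t) \<Longrightarrow> h t (h s x) = h (t + s) x"
    using C by blast
qed

lemma free_pa: "free_partial_action X Xd h \<Longrightarrow> partial_action X Xd h"
  unfolding free_partial_action_def by (rule conjunct1)

lemma free_fix: "free_partial_action X Xd h \<Longrightarrow> x \<in> Xd (- t) \<Longrightarrow> h t x = x \<Longrightarrow> t = 0"
  unfolding free_partial_action_def by blast

lemma pa_inv:
  assumes pa: "partial_action X Xd h" and x: "x \<in> Xd (- s)"
  shows "h (- s) (h s x) = x"
proof -
  have xX: "x \<in> X" using pa_sub[OF pa] x by blast
  have "x \<in> Xd (- s + - (- s))" using xX pa_0[OF pa] by simp
  hence "h (- s) (h s x) = h (- s + s) x" using pa_comp[OF pa x] by blast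
  also have "\<dots> = x" using pa_h0[OF pa xX] by simp
  finally show ?thesis .
qed

lemma pa_in:
  assumes "partial_action X Xd h" "x \<in> Xd (- s)"
  shows "h s x \<in> Xd s"
  using pa_bij[OF assms(1), of s] assms(2) unfolding bij_betw_def by blast

lemma pa_uniq:
  assumes free: "free_partial_action X Xd h" and as: "a \<in> Xd (- s)" and at: "a \<in> Xd (- t)"
    and eq: "h s a = h t a"
  shows "s = t"
proof -
  have pa: "partial_action X Xd h" using free_pa[OF free] .
  have b1: "h s a \<in> Xd s" using pa_in[OF pa as] .
  have b2: "h s a \<in> Xd t" using pa_in[OF pa at] eq by simp
  have img: "h (- s) ` (Xd (- (- s)) \<inter> Xd t) = Xd (- s) \<inter> Xd (- s + t)"
    using pa_img[OF pa, of "- s" t] .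
  have "h (- s) (h s a) \<in> h (- s) ` (Xd (- (- s)) \<inter> Xd t)" using b1 b2 by simp
  hence "h (- s) (h s a) \<in> Xd (- s + t)" using img by blast
  hence a1: "a \<in> Xd (- s + t)" using pa_inv[OF pa as] by simp
  have a1': "a \<in> Xd (- s + - (- t))" using a1 by simp
  have "h (- t) (h s a) = h (- t + s) a" using pa_comp[OF pa as a1'] .
  hence "h (- t + s) a = a" using pa_inv[OF pa at] eq by simp
  moreover have "a \<in> Xd (- (- t + s))" using a1 by (simp add: minus_add)
  ultimately have "- t + s = 0" using free_fix[OF free] by blast
  thus ?thesis by (metis add_minus_cancel add.right_neutral)
qed

lemma R_mem: "(x, y) \<in> orbit_rel Xd h \<longleftrightarrow> (\<exists>t. x \<in> Xd (- t) \<and> y = h t x)"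
  unfolding orbit_rel_def by blast

lemma R_X: assumes "partial_action X Xd h" "(x, y) \<in> orbit_rel Xd h" shows "x \<in> X"
proof -
  obtain t where "x \<in> Xd (- t)" using assms(2) unfolding R_mem by blast
  thus ?thesis using pa_sub[OF assms(1)] by blast
qed

lemma R_refl: assumes pa: "partial_action X Xd h" and x: "x \<in> X" shows "(x, x) \<in> orbit_rel Xd h"
proof -
  have "x \<in> Xd (- 0) \<and> x = h 0 x" using pa_0[OF pa] pa_h0[OF pa x] x by simp
  thus ?thesis unfolding R_mem by blast
qed

lemma R_sym: assumes "partial_action X Xd h" "(x, y) \<in> orbit_rel Xd h" shows "(y, x) \<in> orbit_rel Xd h"
proof -
  obtain t where t: "x \<in> Xd (- t)" "y = h t x" using assms(2) unfolding R_mem by blast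
  have "y \<in> Xd (- (- t))" using pa_in[OF assms(1) t(1)] t(2) by simp
  moreover have "x = h (- t) y" using pa_inv[OF assms(1) t(1)] t(2) by simp
  ultimately show ?thesis unfolding R_mem by blast
qed

definition ee :: "'x \<Rightarrow> 'x \<Rightarrow> ('x \<times> 'x \<Rightarrow> 'k::field)" where
  "ee a b = (\<lambda>p. if p = (a, b) then 1 else 0)"

lemma ee_F0: "(a, b) \<in> S \<Longrightarrow> (ee a b :: 'x \<times> 'x \<Rightarrow> 'k::field) \<in> F0 S"
proof -
  assume "(a, b) \<in> S"
  moreover have "{p. ee a b p \<noteq> (0::'k)} \<subseteq> {(a,b)}" unfolding ee_def by auto
  ultimately show ?thesis unfolding F0_def ee_def by (auto intro: finite_subset)
qed

lemma conv_left:
  fixes g :: "'x \<times> 'x \<Rightarrow> 'k::field"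
  assumes free: "free_partial_action X Xd h" and ab: "(a, b) \<in> orbit_rel Xd h"
  shows "conv Xd h (ee a b) g = (\<lambda>(x, y). if (x, y) \<in> orbit_rel Xd h \<and> x = a then g (b, y) else 0)"
proof (rule ext, clarify)
  fix x y
  obtain s0 where s0: "a \<in> Xd (- s0)" "b = h s0 a" using ab unfolding R_mem by blast
  have S: "{s. x \<in> Xd (- s) \<and> ee a b (x, h s x) \<noteq> (0::'k)} = (if x = a then {s0} else {})"
    using s0 pa_uniq[OF free] unfolding ee_def by auto
  have "conv Xd h (ee a b) g (x, y) = (if (x, y) \<in> orbit_rel Xd h then
      (\<Sum>s \<in> {s. x \<in> Xd (- s) \<and> ee a b (x, h s x) \<noteq> (0::'k)}. ee a b (x, h s x) * g (h s x, y)) else 0)"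
    unfolding conv_def by simp
  also have "\<dots> = (if (x, y) \<in> orbit_rel Xd h \<and> x = a then g (b, y) else 0)"
    unfolding S using s0 by (auto simp: ee_def)
  finally show "conv Xd h (ee a b) g (x, y) = (if (x, y) \<in> orbit_rel Xd h \<and> x = a then g (b, y) else 0)" .
qed

lemma conv_right:
  fixes g :: "'x \<times> 'x \<Rightarrow> 'k::field"
  assumes free: "free_partial_action X Xd h" and ab: "(a, b) \<in> orbit_rel Xd h"
    and g: "g \<in> F0 (orbit_rel Xd h)"
  shows "conv Xd h g (ee a b) = (\<lambda>(x, y). if (x, y) \<in> orbit_rel Xd h \<and> y = b then g (x, a) else 0)"
proof (rule ext, clarify)
  fix x y
  let ?S = "{s. x \<in> Xd (- s) \<and> g (x, h s x) \<noteq> 0}"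
  have sum_eq: "(\<Sum>s\<in>?S. g (x, h s x) * ee a b (h s x, y)) = (if y = b then g (x, a) else 0)"
  proof (cases "y = b \<and> g (x, a) \<noteq> 0")
    case True
    hence "(x, a) \<in> orbit_rel Xd h" using g unfolding F0_def by blast
    then obtain s1 where s1: "x \<in> Xd (- s1)" "a = h s1 x" unfolding R_mem by blast
    have "\<And>s. s \<in> ?S \<Longrightarrow> s \<noteq> s1 \<Longrightarrow> g (x, h s x) * ee a b (h s x, y) = 0"
      using pa_uniq[OF free] s1 unfolding ee_def by auto
    moreover have "s1 \<in> ?S" using s1 True by auto
    moreover have "finite ?S"
    proof (rule inj_on_finite)
      show "inj_on (\<lambda>s. (x, h s x)) ?S" using pa_uniq[OF free] by (auto simp: inj_on_def)
      show "(\<lambda>s. (x, h s x)) ` ?S \<subseteq> {p. g p \<noteq> 0}" by auto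
      show "finite {p. g p \<noteq> 0}" using g unfolding F0_def by blast
    qed
    ultimately have "(\<Sum>s\<in>?S. g (x, h s x) * ee a b (h s x, y)) = (\<Sum>s\<in>{s1}. g (x, h s x) * ee a b (h s x, y))"
      by (intro sum.mono_neutral_right) auto
    hence "(\<Sum>s\<in>?S. g (x, h s x) * ee a b (h s x, y)) = g (x, h s1 x) * ee a b (h s1 x, y)" by simp
    then show ?thesis using True s1 by (simp add: ee_def)
  next
    case False
    hence "\<And>s. s \<in> ?S \<Longrightarrow> g (x, h s x) * ee a b (h s x, y) = 0"
      unfolding ee_def by auto
    then show ?thesis using False by (auto intro: sum.neutral)
  qed
  show "conv Xd h g (ee a b) (x, y) = (if (x, y) \<in> orbit_rel Xd h \<and> y = b then g (x, a) else 0)"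
    unfolding conv_def using sum_eq by auto
qed


theorem mainTheorem13:
  fixes X :: "'x set" and Xd :: "'g::group_add \<Rightarrow> 'x set" and h :: "'g \<Rightarrow> 'x \<Rightarrow> 'x"
    and I :: "('x \<times> 'x \<Rightarrow> 'k::field) set"
  assumes "free_partial_action X Xd h"
    and "is_ideal Xd h I"
  shows "\<exists>Z. Z \<subseteq> X \<and> R_invariant (orbit_rel Xd h) Z \<and>
           I = F0 ((Z \<times> Z) \<inter> orbit_rel Xd h)"
proof -
  note free = assms(1)
  have pa: "partial_action X Xd h" using free_pa[OF free] .
  let ?R = "orbit_rel Xd h"
  have IF0: "I \<subseteq> F0 ?R" and I0: "(\<lambda>_. 0) \<in> I"
    and Iadd: "\<And>f g. f \<in> I \<Longrightarrow> g \<in> I \<Longrightarrow> (\<lambda>p. f p + g p) \<in> I"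
    and Ismult: "\<And>c f. f \<in> I \<Longrightarrow> (\<lambda>p. c * f p) \<in> I"
    and Il: "\<And>f g. f \<in> F0 ?R \<Longrightarrow> g \<in> I \<Longrightarrow> conv Xd h f g \<in> I"
    and Ir: "\<And>f g. f \<in> F0 ?R \<Longrightarrow> g \<in> I \<Longrightarrow> conv Xd h g f \<in> I"
    using assms(2) unfolding is_ideal_def by simp_all
  define Z where "Z = {x. (ee x x :: 'x \<times> 'x \<Rightarrow> 'k) \<in> I}"
  have RX: "\<And>x y. (x, y) \<in> ?R \<Longrightarrow> x \<in> X" using R_X[OF pa] by blast
  have Rrefl: "\<And>x. x \<in> X \<Longrightarrow> (x, x) \<in> ?R" using R_refl[OF pa] by blast
  have Rsym: "\<And>x y. (x, y) \<in> ?R \<Longrightarrow> (y, x) \<in> ?R" using R_sym[OF pa] by blast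
  have ZR: "\<And>x. x \<in> Z \<Longrightarrow> (x, x) \<in> ?R"
  proof -
    fix x assume "x \<in> Z"
    hence "(ee x x :: 'x \<times> 'x \<Rightarrow> 'k) \<in> F0 ?R" using IF0 unfolding Z_def by blast
    moreover have "(ee x x :: 'x \<times> 'x \<Rightarrow> 'k) (x, x) \<noteq> 0" by (simp add: ee_def)
    ultimately show "(x, x) \<in> ?R" unfolding F0_def by blast
  qed
  have ZX: "Z \<subseteq> X" using ZR RX by blast
  have eeI: "\<And>x y. x \<in> Z \<Longrightarrow> (x, y) \<in> ?R \<Longrightarrow> (ee x y :: 'x \<times> 'x \<Rightarrow> 'k) \<in> I"
  proof -
    fix x y assume x: "x \<in> Z" and xy: "(x, y) \<in> ?R"
    have "conv Xd h (ee x x) (ee x y) \<in> I"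
      using Ir[OF ee_F0[OF xy]] x unfolding Z_def by blast
    moreover have "conv Xd h (ee x x) (ee x y) = (ee x y :: 'x \<times> 'x \<Rightarrow> 'k)"
      unfolding conv_right[OF free xy ee_F0[OF ZR[OF x]]] using xy by (auto simp: ee_def fun_eq_iff)
    ultimately show "(ee x y :: 'x \<times> 'x \<Rightarrow> 'k) \<in> I" by simp
  qed
  have inv: "R_invariant ?R Z"
    unfolding R_invariant_def
  proof (intro allI impI, elim conjE)
    fix z x assume zx: "(z, x) \<in> ?R" and z: "z \<in> Z"
    have xz: "(x, z) \<in> ?R" using Rsym[OF zx] .
    have "(ee z x :: 'x \<times> 'x \<Rightarrow> 'k) \<in> I" using eeI[OF z zx] .
    hence "conv Xd h (ee x z) (ee z x) \<in> I" using Il[OF ee_F0[OF xz]] by blast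
    moreover have "conv Xd h (ee x z) (ee z x) = (ee x x :: 'x \<times> 'x \<Rightarrow> 'k)"
      unfolding conv_left[OF free xz] using Rrefl[OF RX[OF xz]] by (auto simp: ee_def fun_eq_iff)
    ultimately show "x \<in> Z" unfolding Z_def by simp
  qed
  have sub1: "I \<subseteq> F0 ((Z \<times> Z) \<inter> ?R)"
  proof
    fix f assume f: "f \<in> I"
    have fF: "f \<in> F0 ?R" using f IF0 by blast
    have "f p = 0" if np: "p \<notin> (Z \<times> Z) \<inter> ?R" for p
    proof (rule ccontr)
      obtain x y where p: "p = (x, y)" by (cases p)
      assume nz: "f p \<noteq> 0"
      hence xy: "(x, y) \<in> ?R" using fF p unfolding F0_def by blast
      have yx: "(y, x) \<in> ?R" using Rsym[OF xy] .
      have xx: "(x, x) \<in> ?R" using Rrefl[OF RX[OF xy]] .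
      have yy: "(y, y) \<in> ?R" using Rrefl[OF RX[OF yx]] .
      define c where "c = f (x, y)"
      have c: "c \<noteq> 0" using nz p c_def by simp
      have g1: "conv Xd h (ee x x) f \<in> I" using Il[OF ee_F0[OF xx] f] .
      have g1eq: "conv Xd h (ee x x) f = (\<lambda>(p, q). if (p, q) \<in> ?R \<and> p = x then f (x, q) else 0)"
        using conv_left[OF free xx] .
      have g1F: "conv Xd h (ee x x) f \<in> F0 ?R" using g1 IF0 by blast
      have "conv Xd h (conv Xd h (ee x x) f) (ee y x) \<in> I" using Ir[OF ee_F0[OF yx] g1] .
      moreover have "conv Xd h (conv Xd h (ee x x) f) (ee y x) = (\<lambda>p. c * ee x x p)"
        using xy xx apply (simp only: conv_right[OF free yx g1F])
        apply (simp only: g1eq)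
        by (auto simp: c_def ee_def fun_eq_iff)
      ultimately have "(\<lambda>p. c * ee x x p) \<in> I" by simp
      hence "(\<lambda>p. inverse c * (c * ee x x p)) \<in> I" by (rule Ismult)
      hence "(ee x x :: 'x \<times> 'x \<Rightarrow> 'k) \<in> I" using c by (simp add: field_simps)
      hence xZ: "x \<in> Z" unfolding Z_def by simp
      have g2: "conv Xd h (ee y x) f \<in> I" using Il[OF ee_F0[OF yx] f] .
      have g2eq: "conv Xd h (ee y x) f = (\<lambda>(p, q). if (p, q) \<in> ?R \<and> p = y then f (x, q) else 0)"
        using conv_left[OF free yx] .
      have g2F: "conv Xd h (ee y x) f \<in> F0 ?R" using g2 IF0 by blast
      have "conv Xd h (conv Xd h (ee y x) f) (ee y y) \<in> I" using Ir[OF ee_F0[OF yy] g2] .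
      moreover have "conv Xd h (conv Xd h (ee y x) f) (ee y y) = (\<lambda>p. c * ee y y p)"
        using yy apply (simp only: conv_right[OF free yy g2F])
        apply (simp only: g2eq)
        by (auto simp: c_def ee_def fun_eq_iff)
      ultimately have "(\<lambda>p. c * ee y y p) \<in> I" by simp
      hence "(\<lambda>p. inverse c * (c * ee y y p)) \<in> I" by (rule Ismult)
      hence "(ee y y :: 'x \<times> 'x \<Rightarrow> 'k) \<in> I" using c by (simp add: field_simps)
      hence yZ: "y \<in> Z" unfolding Z_def by simp
      show False using np p xZ yZ xy by simp
    qed
    thus "f \<in> F0 ((Z \<times> Z) \<inter> ?R)" using fF unfolding F0_def by blast
  qed
  have key: "\<And>A. finite A \<Longrightarrow> \<forall>f. (\<forall>p. f p \<noteq> 0 \<longrightarrow> p \<in> A) \<and> (\<forall>p. f p \<noteq> 0 \<longrightarrow> p \<in> (Z \<times> Z) \<inter> ?R) \<longrightarrow> f \<in> I"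
  proof -
    fix A :: "('x \<times> 'x) set" assume "finite A"
    thus "?thesis A"
    proof (induction A rule: finite_induct)
      case empty
      show ?case
      proof (intro allI impI)
        fix f :: "'x \<times> 'x \<Rightarrow> 'k"
        assume "(\<forall>p. f p \<noteq> 0 \<longrightarrow> p \<in> {}) \<and> (\<forall>p. f p \<noteq> 0 \<longrightarrow> p \<in> (Z \<times> Z) \<inter> ?R)"
        hence "f = (\<lambda>_. 0)" by (auto simp: fun_eq_iff)
        thus "f \<in> I" using I0 by simp
      qed
    next
      case (insert a A)
      show ?case
      proof (intro allI impI)
        fix f :: "'x \<times> 'x \<Rightarrow> 'k"
        assume H: "(\<forall>p. f p \<noteq> 0 \<longrightarrow> p \<in> insert a A) \<and> (\<forall>p. f p \<noteq> 0 \<longrightarrow> p \<in> (Z \<times> Z) \<inter> ?R)"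
        define g where "g = (\<lambda>p. if p = a then 0 else f p)"
        have gp: "(\<forall>p. g p \<noteq> 0 \<longrightarrow> p \<in> A) \<and> (\<forall>p. g p \<noteq> 0 \<longrightarrow> p \<in> (Z \<times> Z) \<inter> ?R)"
          using H unfolding g_def by auto
        have gI: "g \<in> I" using mp[OF spec[OF insert.IH, of g] gp] .
        obtain x y where a: "a = (x, y)" by (cases a)
        have "(\<lambda>p. f a * ee x y p) \<in> I"
        proof (cases "f a = 0")
          case True
          have "(\<lambda>p. f a * ee x y p) = (\<lambda>_. 0)" using True by simp
          thus ?thesis using I0 by simp
        next
          case False
          hence "a \<in> (Z \<times> Z) \<inter> ?R" using H by blast
          hence "x \<in> Z" "(x, y) \<in> ?R" using a by auto
          from eeI[OF this] show ?thesis by (rule Ismult)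
        qed
        from Iadd[OF gI this]
        have "(\<lambda>p. g p + f a * ee x y p) \<in> I" .
        moreover have "(\<lambda>p. g p + f a * ee x y p) = f"
          unfolding g_def ee_def a by (auto simp: fun_eq_iff)
        ultimately show "f \<in> I" by simp
      qed
    qed
  qed
  have sub2: "F0 ((Z \<times> Z) \<inter> ?R) \<subseteq> I"
  proof
    fix f :: "'x \<times> 'x \<Rightarrow> 'k" assume f: "f \<in> F0 ((Z \<times> Z) \<inter> ?R)"
    hence "finite {p. f p \<noteq> 0}" unfolding F0_def by blast
    note k = spec[OF key[OF this], of f]
    have "(\<forall>p. f p \<noteq> 0 \<longrightarrow> p \<in> {p. f p \<noteq> 0}) \<and> (\<forall>p. f p \<noteq> 0 \<longrightarrow> p \<in> (Z \<times> Z) \<inter> ?R)"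
      using f unfolding F0_def by blast
    from mp[OF k this] show "f \<in> I" .
  qed
  have "I = F0 ((Z \<times> Z) \<inter> ?R)" using sub1 sub2 by (rule subset_antisym)
  thus ?thesis using ZX inv by blast
qed

end
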